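(* Let $D_K$ be a relative $K$-entropy satisfying Properties (a), (b), (c) and (d) below, and let $H_K$ be the associated conditional entropy, defined by one of the two forms below. Let $X=\{X_j\}$ be an arbitrary POVM on $\mathcal{H}_A$. Then for every density operator $\rho_{AB}$, $$H_K(X|B)\ge\log\frac{1}{c(X)},\qquad c(X):=\max_j\|X_j\|_\infty .$$
   Context: All Hilbert spaces are finite-dimensional; $\log$ has an arbitrary but fixed base; $\|\cdot\|_\infty$ is the largest singular value. A relative $K$-entropy $D_K$ assigns to every pair $(S,T)$ of positive semidefinite operators on a common Hilbert space an extended real number $D_K(S\|T)$. Properties: (a) for every trace-preserving completely positive map (TPCPM) $\mathcal{E}$ (possibly between different spaces), $D_K(\mathcal{E}(S)\|\mathcal{E}(T))\le D_K(S\|T)$; (b) for positive semidefinite $S,T$ on $\mathcal{H}$ and $T'$ on $\mathcal{H}'$, $D_K(S\oplus 0\,\|\,T\oplus T')=D_K(S\|T)$; (c) for every constant $c>0$, $D_K(S\|cT)=D_K(S\|T)+\log\frac1c$; (d) $D_K(\rho\|\rho)=0$ for every density operator $\rho$. The conditional $K$-entropy of a density operator $\rho_{AB}$ is either $H_K(A|B)=-D_K(\rho_{AB}\|\mathbb{1}_A\otimes\rho_B)$ for all $\rho_{AB}$, or $H_K(A|B)=\max_{\sigma_B}[-D_K(\rho_{AB}\|\mathbb{1}_A\otimes\sigma_B)]$ for all $\rho_{AB}$, maximum over density operators $\sigma_B$. For a POVM $X=\{X_j\}$ on $\mathcal{H}_A$, let $\mathcal{X}:\rho_A\mapsto\sum_j|j\rangle\langle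 j|_X\,\mathrm{Tr}(X_j\rho_A)$ with $\{|j\rangle\}$ orthonormal in a register $\mathcal{H}_X$; $H_K(X|B)$ denotes $H_K$ of the state $(\mathcal{X}\otimes\mathcal{I})(\rho_{AB})$ (register $X$ given $B$). *)

theory Defs
  imports "HOL-Analysis.Analysis" "Jordan_Normal_Form.Matrix" "Jordan_Normal_Form.Char_Poly"
begin

definition dagger :: "complex mat \<Rightarrow> complex mat" where
  "dagger A = mat (dim_col A) (dim_row A) (\<lambda>(i,j). cnj (A $$ (j,i)))"

definition mtr :: "complex mat \<Rightarrow> complex" where
  "mtr A = (\<Sum>i<dim_row A. A $$ (i,i))"

definition cinner :: "complex vec \<Rightarrow> complex vec \<Rightarrow> complex" where
  "cinner v w = (\<Sum>i<dim_vec v. cnj (v $ i) * w $ i)"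

definition psd :: "nat \<Rightarrow> complex mat \<Rightarrow> bool" where
  "psd n A \<longleftrightarrow> A \<in> carrier_mat n n \<and> dagger A = A \<and>
     (\<forall>v \<in> carrier_vec n. Im (cinner v (A *\<^sub>v v)) = 0 \<and> 0 \<le> Re (cinner v (A *\<^sub>v v)))"

definition density :: "nat \<Rightarrow> complex mat \<Rightarrow> bool" where
  "density n \<rho> \<longleftrightarrow> psd n \<rho> \<and> mtr \<rho> = 1"

text \<open>Kronecker (tensor) product; index (i,k) of A \<otimes> B is i * dim B + k.\<close>
definition kron :: "complex mat \<Rightarrow> complex mat \<Rightarrow> complex mat" where
  "kron A B = mat (dim_row A * dim_row B) (dim_col A * dim_col B)
     (\<lambda>(i,j). A $$ (i div dim_row B, j div dim_col B) * B $$ (i mod dim_row B, j mod dim_col B))"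

definition dsum :: "complex mat \<Rightarrow> complex mat \<Rightarrow> complex mat" where
  "dsum S T = four_block_mat S (0\<^sub>m (dim_row S) (dim_col T)) (0\<^sub>m (dim_row T) (dim_col S)) T"

text \<open>Block (b,b') of an operator on H_1 \<otimes> H_2 (dims n and d): the n x n operator
  with entries <a,b| R |a',b'>.\<close>
definition blk :: "nat \<Rightarrow> nat \<Rightarrow> complex mat \<Rightarrow> nat \<Rightarrow> nat \<Rightarrow> complex mat" where
  "blk n d R b b' = mat n n (\<lambda>(a,a'). R $$ (a * d + b, a' * d + b'))"

text \<open>(E \<otimes> id_d)(R) for a linear map E from n x n to m x m operators.\<close>
definition tensor_id :: "(complex mat \<Rightarrow> complex mat) \<Rightarrow> nat \<Rightarrow> nat \<Rightarrow> nat \<Rightarrow> complex mat \<Rightarrow> complex mat" where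
  "tensor_id E n m d R = mat (m * d) (m * d)
     (\<lambda>(i,j). E (blk n d R (i mod d) (j mod d)) $$ (i div d, j div d))"

definition ptrA :: "nat \<Rightarrow> nat \<Rightarrow> complex mat \<Rightarrow> complex mat" where
  "ptrA dA dB R = mat dB dB (\<lambda>(b,b'). \<Sum>a<dA. R $$ (a * dB + b, a * dB + b'))"

definition tpcpm :: "nat \<Rightarrow> nat \<Rightarrow> (complex mat \<Rightarrow> complex mat) \<Rightarrow> bool" where
  "tpcpm n m E \<longleftrightarrow>
     (\<forall>A \<in> carrier_mat n n. E A \<in> carrier_mat m m) \<and>
     (\<forall>A \<in> carrier_mat n n. \<forall>B \<in> carrier_mat n n. E (A + B) = E A + E B) \<and>
     (\<forall>A \<in> carrier_mat n n. \<forall>c. E (c \<cdot>\<^sub>m A) = c \<cdot>\<^sub>m E A) \<and>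
     (\<forall>A \<in> carrier_mat n n. mtr (E A) = mtr A) \<and>
     (\<forall>k P. psd (n * k) P \<longrightarrow> psd (m * k) (tensor_id E n m k P))"

definition rel_K_entropy :: "real \<Rightarrow> (complex mat \<Rightarrow> complex mat \<Rightarrow> ereal) \<Rightarrow> bool" where
  "rel_K_entropy b D \<longleftrightarrow>
     (\<forall>n m E S T. tpcpm n m E \<and> psd n S \<and> psd n T \<longrightarrow> D (E S) (E T) \<le> D S T) \<and>
     (\<forall>n n' S T T'. psd n S \<and> psd n T \<and> psd n' T' \<longrightarrow>
         D (dsum S (0\<^sub>m n' n')) (dsum T T') = D S T) \<and>
     (\<forall>n S T c. psd n S \<and> psd n T \<and> c > 0 \<longrightarrow>
         D S (complex_of_real c \<cdot>\<^sub>m T) = D S T + ereal (log b (1 / c))) \<and>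
     (\<forall>n \<rho>. density n \<rho> \<longrightarrow> D \<rho> \<rho> = 0)"

definition H_K1 :: "(complex mat \<Rightarrow> complex mat \<Rightarrow> ereal) \<Rightarrow> nat \<Rightarrow> nat \<Rightarrow> complex mat \<Rightarrow> ereal" where
  "H_K1 D dA dB \<rho> = - D \<rho> (kron (1\<^sub>m dA) (ptrA dA dB \<rho>))"

definition H_K2 :: "(complex mat \<Rightarrow> complex mat \<Rightarrow> ereal) \<Rightarrow> nat \<Rightarrow> nat \<Rightarrow> complex mat \<Rightarrow> ereal" where
  "H_K2 D dA dB \<rho> = (SUP \<sigma> \<in> {\<sigma>. density dB \<sigma>}. - D \<rho> (kron (1\<^sub>m dA) \<sigma>))"

definition povm :: "nat \<Rightarrow> complex mat list \<Rightarrow> bool" where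
  "povm n Xs \<longleftrightarrow> (\<forall>X \<in> set Xs. psd n X) \<and>
     mat n n (\<lambda>ij. \<Sum>j<length Xs. (Xs ! j) $$ ij) = 1\<^sub>m n"

definition meas_map :: "complex mat list \<Rightarrow> complex mat \<Rightarrow> complex mat" where
  "meas_map Xs \<rho> = mat (length Xs) (length Xs)
     (\<lambda>(i,j). if i = j then mtr (Xs ! i * \<rho>) else 0)"

definition smax :: "complex mat \<Rightarrow> real" where
  "smax A = Max ((\<lambda>k. sqrt (Re k)) ` Collect (eigenvalue (dagger A * A)))"

definition cX :: "complex mat list \<Rightarrow> real" where
  "cX Xs = Max (smax ` set Xs)"

end

theory Submission
  imports Defs "Jordan_Normal_Form.Spectral_Radius"
begin


definition bf :: "nat \<Rightarrow> (nat\<Rightarrow>nat\<Rightarrow>complex) \<Rightarrow> (nat\<Rightarrow>complex) \<Rightarrow> (nat\<Rightarrow>complex) \<Rightarrow> complex" where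
 "bf n M u v = (\<Sum>i<n. \<Sum>j<n. cnj (u i) * M i j * v j)"
definition herm :: "nat \<Rightarrow> (nat\<Rightarrow>nat\<Rightarrow>complex) \<Rightarrow> bool" where
 "herm n M = (\<forall>i<n. \<forall>j<n. M j i = cnj (M i j))"
definition psdf :: "nat \<Rightarrow> (nat\<Rightarrow>nat\<Rightarrow>complex) \<Rightarrow> bool" where
 "psdf n M = (herm n M \<and> (\<forall>v. 0 \<le> bf n M v v))"

lemma hermD: "herm n M \<Longrightarrow> i < n \<Longrightarrow> j < n \<Longrightarrow> M j i = cnj (M i j)"
  unfolding herm_def by blast

lemma sum_lessThan_plus: "(\<Sum>i<(m::nat)+k. f i) = (\<Sum>i<m. f i) + (\<Sum>b<k. f (m+b))"
  by (induction k) (simp_all add: add.assoc)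

lemma sum_split_mult: "(\<Sum>i<(n::nat)*d. f i) = (\<Sum>a<n. \<Sum>b<d. f (a*d+b))"
proof (induction n)
  case 0 then show ?case by simp
next
  case (Suc n)
  have "(\<Sum>i<Suc n*d. f i) = (\<Sum>i<n*d + d. f i)" by (simp add: add.commute)
  also have "\<dots> = (\<Sum>i<n*d. f i) + (\<Sum>b<d. f (n*d+b))"
    by (rule sum_lessThan_plus)
  finally show ?case using Suc by simp
qed

lemma cinner_eq_bf:
  assumes A: "A \<in> carrier_mat n n" and v: "v \<in> carrier_vec n"
  shows "cinner v (A *\<^sub>v v) = bf n (\<lambda>i j. A $$ (i,j)) (\<lambda>i. v $ i) (\<lambda>i. v $ i)"
proof -
  have "cinner v (A *\<^sub>v v) = (\<Sum>i<n. cnj (v $ i) * (\<Sum>j<n. A $$ (i,j) * v $ j))"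
    unfolding cinner_def using A v
    by (intro sum.cong) (auto simp: scalar_prod_def atLeast0LessThan)
  also have "\<dots> = bf n (\<lambda>i j. A $$ (i,j)) (\<lambda>i. v $ i) (\<lambda>i. v $ i)"
    unfolding bf_def by (simp add: sum_distrib_left mult.assoc)
  finally show ?thesis .
qed

lemma bf_vec: "bf n M (\<lambda>i. vec n f $ i) (\<lambda>i. vec n f $ i) = bf n M f f"
  unfolding bf_def by (intro sum.cong refl) auto

lemma psd_iff: "psd n A \<longleftrightarrow> A \<in> carrier_mat n n \<and> psdf n (\<lambda>i j. A $$ (i,j))"
proof
  assume p: "psd n A"
  then have A: "A \<in> carrier_mat n n" and d: "dagger A = A" and f: "\<And>v. v \<in> carrier_vec n \<Longrightarrow> Im (cinner v (A *\<^sub>v v)) = 0 \<and> 0 \<le> Re (cinner v (A *\<^sub>v v))"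
    unfolding psd_def by auto
  have "herm n (\<lambda>i j. A $$ (i,j))" unfolding herm_def
  proof (intro allI impI)
    fix i j assume ij: "i < n" "j < n"
    have "A $$ (j,i) = dagger A $$ (j,i)" using d by simp
    also have "\<dots> = cnj (A $$ (i,j))" using A ij unfolding dagger_def by auto
    finally show "A $$ (j,i) = cnj (A $$ (i,j))" .
  qed
  moreover have "0 \<le> bf n (\<lambda>i j. A $$ (i,j)) v v" for v
  proof -
    have "vec n v \<in> carrier_vec n" by simp
    from f[OF this] cinner_eq_bf[OF A this] bf_vec show ?thesis
      by (auto simp: less_eq_complex_def)
  qed
  ultimately show "A \<in> carrier_mat n n \<and> psdf n (\<lambda>i j. A $$ (i,j))" using A unfolding psdf_def by auto
next
  assume "A \<in> carrier_mat n n \<and> psdf n (\<lambda>i j. A $$ (i,j))"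
  then have A: "A \<in> carrier_mat n n" and h: "herm n (\<lambda>i j. A $$ (i,j))" and f: "\<And>v. 0 \<le> bf n (\<lambda>i j. A $$ (i,j)) v v"
    unfolding psdf_def by auto
  have "dagger A = A"
  proof (rule eq_matI)
    fix i j assume ij: "i < dim_row A" "j < dim_col A"
    then have "A $$ (i,j) = cnj (A $$ (j,i))" using A h hermD[of n _ j i] by auto
    then show "dagger A $$ (i,j) = A $$ (i,j)" using A ij unfolding dagger_def by auto
  qed (use A in \<open>auto simp: dagger_def\<close>)
  moreover have "Im (cinner v (A *\<^sub>v v)) = 0 \<and> 0 \<le> Re (cinner v (A *\<^sub>v v))" if v: "v \<in> carrier_vec n" for v
    using f[of "\<lambda>i. v $ i"] cinner_eq_bf[OF A v] by (auto simp: less_eq_complex_def)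
  ultimately show "psd n A" using A unfolding psd_def by auto
qed

lemma bf_add_left: "bf n M (\<lambda>i. u i + w i) v = bf n M u v + bf n M w v"
  unfolding bf_def by (simp add: algebra_simps sum.distrib)
lemma bf_add_right: "bf n M u (\<lambda>i. v i + w i) = bf n M u v + bf n M u w"
  unfolding bf_def by (simp add: algebra_simps sum.distrib)
lemma bf_scale_left: "bf n M (\<lambda>i. c * u i) v = cnj c * bf n M u v"
  unfolding bf_def by (simp add: algebra_simps sum_distrib_left)
lemma bf_scale_right: "bf n M u (\<lambda>i. c * v i) = c * bf n M u v"
  unfolding bf_def by (simp add: algebra_simps sum_distrib_left)
lemma bf_herm: assumes "herm n M" shows "bf n M u v = cnj (bf n M v u)"
proof -
  have "cnj (bf n M v u) = (\<Sum>i<n. \<Sum>j<n. cnj (u j) * M j i * v i)"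
    unfolding bf_def cnj_sum
  proof (intro sum.cong refl)
    fix i j assume "i \<in> {..<n}" "j \<in> {..<n}"
    then have "M j i = cnj (M i j)" using hermD[OF assms, of i j] by simp
    then show "cnj (cnj (v i) * M i j * u j) = cnj (u j) * M j i * v i" by simp
  qed
  also have "\<dots> = bf n M u v" unfolding bf_def by (rule sum.swap)
  finally show ?thesis by simp
qed

lemma bf_Mv: "bf n M w v = (\<Sum>i<n. cnj (w i) * (\<Sum>j<n. M i j * v j))"
  unfolding bf_def by (simp add: sum_distrib_left mult.assoc)

lemma psdf_kernel:
  assumes p: "psdf n M" and z: "bf n M v v = 0" and i: "i < n"
  shows "(\<Sum>j<n. M i j * v j) = 0"
proof -
  define w where "w i = (\<Sum>j<n. M i j * v j)" for i
  have h: "herm n M" and pos: "\<And>u. 0 \<le> bf n M u u" using p unfolding psdf_def by auto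
  define S where "S = (\<Sum>i<n. (cmod (w i))^2)"
  have s: "bf n M w v = of_real S"
  proof -
    have "of_real S = (\<Sum>i<n. w i * cnj (w i))" unfolding S_def of_real_sum
      by (intro sum.cong refl) (metis complex_norm_square)
    then show ?thesis unfolding bf_Mv w_def[symmetric] by (simp add: mult.commute)
  qed
  have s': "bf n M v w = of_real S" using bf_herm[OF h, of v w] s by simp
  define Q where "Q = Re (bf n M w w)"
  have q: "bf n M w w = of_real Q" using pos[of w] unfolding Q_def
    by (simp add: less_eq_complex_def complex_eq_iff)
  have Q0: "Q \<ge> 0" using pos[of w] unfolding Q_def by (simp add: less_eq_complex_def)
  have S0: "S \<ge> 0" unfolding S_def by (simp add: sum_nonneg)
  have key: "0 \<le> 2 * t * S + t^2 * Q" for t :: real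
  proof -
    have "bf n M (\<lambda>i. v i + of_real t * w i) (\<lambda>i. v i + of_real t * w i)
      = bf n M v v + of_real t * bf n M v w + of_real t * bf n M w v + of_real t * of_real t * bf n M w w"
      by (simp add: bf_add_left bf_add_right bf_scale_left bf_scale_right algebra_simps)
    also have "\<dots> = of_real (2 * t * S + t^2 * Q)" using z s s' q by (simp add: power2_eq_square algebra_simps)
    finally show ?thesis using pos[of "\<lambda>i. v i + of_real t * w i"] by (simp add: less_eq_complex_def)
  qed
  have "S = 0"
  proof (rule ccontr)
    assume "S \<noteq> 0"
    then have Sp: "S > 0" using S0 by simp
    define t where "t = - S / (Q + 1)"
    have "0 \<le> 2 * t * S + t^2 * Q" by (rule key)
    then have "0 \<le> (2 * t * S + t^2 * Q) * (Q+1)^2" using Q0 by simp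
    also have "\<dots> = - (S^2 * (Q + 2))"
    proof -
      have q1: "Q + 1 \<noteq> 0" using Q0 by linarith
      have tq: "t * (Q+1) = - S" unfolding t_def using q1 by simp
      have "(2 * t * S + t^2 * Q) * (Q+1)^2 = 2 * S * (t * (Q+1)) * (Q+1) + (t * (Q+1))^2 * Q"
        by (simp add: algebra_simps power2_eq_square)
      also have "\<dots> = - (S^2 * (Q + 2))" unfolding tq by (simp add: algebra_simps power2_eq_square)
      finally show ?thesis .
    qed
    finally have "0 \<le> - (S^2 * (Q + 2))" .
    moreover have "S^2 * (Q + 2) > 0" using Sp Q0 by simp
    ultimately show False by linarith
  qed
  then have "\<forall>i\<in>{..<n}. (cmod (w i))^2 = 0" unfolding S_def
    by (subst sum_nonneg_eq_0_iff[symmetric]) auto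
  then show ?thesis using i unfolding w_def by auto
qed


definition ev :: "nat \<Rightarrow> nat \<Rightarrow> complex" where "ev k = (\<lambda>i. if i = k then 1 else 0)"

lemma sum_delta_r: "k < n \<Longrightarrow> (\<Sum>j<n. f j * ev k j) = f k"
  by (subst sum.remove[of _ k]) (auto simp: ev_def)
lemma sum_delta_l: "k < n \<Longrightarrow> (\<Sum>j<n. cnj (ev k j) * f j) = f k"
  by (subst sum.remove[of _ k]) (auto simp: ev_def)

lemma bf_ev_left: "k < n \<Longrightarrow> bf n M (ev k) v = (\<Sum>j<n. M k j * v j)"
  unfolding bf_Mv by (rule sum_delta_l)

lemma bf_ev_right: "k < n \<Longrightarrow> bf n M u (ev k) = (\<Sum>i<n. cnj (u i) * M i k)"
  unfolding bf_Mv by (simp add: sum_delta_r)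

lemma bf_ev: "k < n \<Longrightarrow> bf n M (ev k) (ev k) = M k k"
  by (simp add: bf_ev_right sum_delta_l)

lemma psdf_diag: "psdf n M \<Longrightarrow> k < n \<Longrightarrow> 0 \<le> M k k"
  using bf_ev[of k n M] unfolding psdf_def by metis

lemma psdf_zero_col:
  assumes p: "psdf n M" and k: "k < n" and z: "M k k = 0" and a: "a < n"
  shows "M a k = 0" "M k a = 0"
proof -
  have "bf n M (ev k) (ev k) = 0" using bf_ev[OF k] z by simp
  from psdf_kernel[OF p this a] have "(\<Sum>j<n. M a j * ev k j) = 0" .
  then show "M a k = 0" using k by (simp add: sum_delta_r)
  then show "M k a = 0" using hermD[of n M a k] p a k unfolding psdf_def by simp
qed

lemma bf_expand: "bf n M (\<lambda>k. u k + c * w k) (\<lambda>k. u k + c * w k)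
   = bf n M u u + (c * bf n M u w + cnj c * bf n M w u + cnj c * c * bf n M w w)"
  by (simp add: bf_add_left bf_add_right bf_scale_left bf_scale_right algebra_simps)

lemma psdf_step:
  assumes p: "psdf n Y" and i: "i < n" and nz: "Y i i \<noteq> 0"
  defines "r \<equiv> Y i i"
  defines "Y' \<equiv> (\<lambda>a a'. Y a a' - Y a i * Y i a' / r)"
  shows "psdf n Y'" "Y' i i = 0" "\<And>k. k < n \<Longrightarrow> Y k k = 0 \<Longrightarrow> Y' k k = 0"
    "\<exists>y. \<forall>a<n. \<forall>a'<n. Y a a' = Y' a a' + y a * cnj (y a')"
proof -
  have h: "herm n Y" using p unfolding psdf_def by auto
  have r0: "0 \<le> r" using psdf_diag[OF p i] unfolding r_def .
  have rr: "of_real (Re r) = r" using r0 by (simp add: less_eq_complex_def complex_eq_iff)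
  have rpos: "Re r > 0" using r0 nz unfolding r_def by (auto simp: less_eq_complex_def complex_eq_iff)
  have cr: "cnj r = r" using r0 by (simp add: less_eq_complex_def complex_eq_iff)
  have rnz: "r \<noteq> 0" using nz r_def by simp
  show "Y' i i = 0" unfolding Y'_def r_def using nz by simp
  show "Y' k k = 0" if k: "k < n" "Y k k = 0" for k
  proof -
    have "Y k i = 0" by (rule psdf_zero_col(2)[OF p k i])
    then show ?thesis unfolding Y'_def using k by simp
  qed
  show "\<exists>y. \<forall>a<n. \<forall>a'<n. Y a a' = Y' a a' + y a * cnj (y a')"
  proof (intro exI allI impI)
    fix a a' assume a: "a < n" and a': "a' < n"
    define s where "s = sqrt (Re r)"
    have s2: "s * s = Re r" unfolding s_def using rpos by simp
    have ss: "of_real s * of_real s = r"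
    proof -
      have "(of_real s * of_real s :: complex) = of_real (s * s)" by simp
      also have "\<dots> = r" unfolding s2 by (rule rr)
      finally show ?thesis .
    qed
    have c1: "cnj (Y a' i / of_real s) = Y i a' / of_real s" using hermD[OF h i a'] by simp
    have "Y a i / of_real s * cnj (Y a' i / of_real s) = Y a i * Y i a' / (of_real s * of_real s)"
      unfolding c1 by simp
    then have "Y a i / of_real s * cnj (Y a' i / of_real s) = Y a i * Y i a' / r" unfolding ss .
    then show "Y a a' = Y' a a' + Y a i / of_real s * cnj (Y a' i / of_real s)"
      unfolding Y'_def by simp
  qed
  show "psdf n Y'" unfolding psdf_def
  proof (intro conjI allI)
    show "herm n Y'" unfolding herm_def
    proof (intro allI impI)
      fix a a' assume a: "a < n" and a': "a' < n"
      show "Y' a' a = cnj (Y' a a')"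
        unfolding Y'_def using hermD[OF h a a'] hermD[OF h a i] hermD[OF h i a'] cr
        by (simp add: mult.commute)
    qed
  next
    fix v
    define p where "p = (\<Sum>j<n. Y i j * v j)"
    define t where "t = p / r"
    have pc: "(\<Sum>a<n. cnj (v a) * Y a i) = cnj p"
      using bf_herm[OF h, of v "ev i"] bf_ev_left[OF i] bf_ev_right[OF i] unfolding p_def by simp
    have "bf n Y' v v = bf n Y v v - (\<Sum>a<n. cnj (v a) * Y a i) * (\<Sum>a'<n. Y i a' * v a') / r"
    proof -
      have "bf n Y' v v = (\<Sum>a<n. \<Sum>a'<n. cnj (v a) * Y a a' * v a' - (cnj (v a) * Y a i) * (Y i a' * v a') / r)"
        unfolding bf_def Y'_def by (intro sum.cong refl) (simp add: algebra_simps)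
      also have "\<dots> = bf n Y v v - (\<Sum>a<n. \<Sum>a'<n. (cnj (v a) * Y a i) * (Y i a' * v a')) / r"
        unfolding bf_def by (simp add: sum_subtractf sum_divide_distrib)
      also have "\<dots> = bf n Y v v - (\<Sum>a<n. cnj (v a) * Y a i) * (\<Sum>a'<n. Y i a' * v a') / r"
        by (simp add: sum_product)
      finally show ?thesis .
    qed
    also have "\<dots> = bf n Y v v - cnj p * p / r" unfolding pc p_def ..
    also have "\<dots> = bf n Y (\<lambda>k. v k + (- t) * ev i k) (\<lambda>k. v k + (- t) * ev i k)"
    proof -
      have e1: "bf n Y v (ev i) = cnj p" using bf_ev_right[OF i] pc by simp
      have e2: "bf n Y (ev i) v = p" using bf_ev_left[OF i] p_def by simp
      have e3: "bf n Y (ev i) (ev i) = r" using bf_ev[OF i] r_def by simp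
      have ct: "cnj t = cnj p / r" unfolding t_def using cr by simp
      have ex: "bf n Y (\<lambda>k. v k + (- t) * ev i k) (\<lambda>k. v k + (- t) * ev i k)
          = bf n Y v v + ((- t) * cnj p + cnj (- t) * p + cnj (- t) * (- t) * r)"
        unfolding bf_expand e1 e2 e3 by (simp add: algebra_simps)
      have eqn: "(- t) * cnj p + cnj (- t) * p + cnj (- t) * (- t) * r = - (cnj p * p / r)"
      proof -
        have "(- t) * cnj p + cnj (- t) * p + cnj (- t) * (- t) * r
            = - (p * cnj p / r) - (cnj p * p / r) + (cnj p * p / r) * (r / r)"
          unfolding complex_cnj_minus ct unfolding t_def by (simp add: algebra_simps)
        also have "\<dots> = - (cnj p * p / r)" using rnz by (simp add: mult.commute)
        finally show ?thesis .
      qed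
      show ?thesis unfolding ex eqn by (simp only: diff_conv_add_uminus)
    qed
    finally show "0 \<le> bf n Y' v v" using p unfolding psdf_def by simp
  qed
qed

lemma psdf_decomp:
  "psdf n Y \<Longrightarrow> \<exists>ys. \<forall>a<n. \<forall>a'<n. Y a a' = (\<Sum>y\<leftarrow>ys. y a * cnj (y a'))"
proof (induction "card {k. k < n \<and> Y k k \<noteq> 0}" arbitrary: Y rule: less_induct)
  case less
  show ?case
  proof (cases "\<exists>i<n. Y i i \<noteq> 0")
    case False
    have "Y a a' = 0" if "a < n" "a' < n" for a a'
      using psdf_zero_col(1)[OF less.prems that(2) _ that(1)] False that by auto
    then show ?thesis by (intro exI[of _ "[]"]) auto
  next
    case True
    then obtain i where i: "i < n" and nz: "Y i i \<noteq> 0" by auto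
    define Y' where "Y' = (\<lambda>a a'. Y a a' - Y a i * Y i a' / Y i i)"
    have st1: "psdf n Y'" using psdf_step(1)[OF less.prems i nz] unfolding Y'_def .
    have st2: "Y' i i = 0" using psdf_step(2)[OF less.prems i nz] unfolding Y'_def .
    have st3: "Y' k k = 0" if "k < n" "Y k k = 0" for k
      using psdf_step(3)[OF less.prems i nz that] unfolding Y'_def .
    have st4: "\<exists>y. \<forall>a<n. \<forall>a'<n. Y a a' = Y' a a' + y a * cnj (y a')"
      using psdf_step(4)[OF less.prems i nz] unfolding Y'_def .
    have sub1: "{k. k < n \<and> Y' k k \<noteq> 0} \<subseteq> {k. k < n \<and> Y k k \<noteq> 0}"
      using st3 by blast
    have sub2: "i \<notin> {k. k < n \<and> Y' k k \<noteq> 0}" using st2 by simp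
    have sub: "{k. k < n \<and> Y' k k \<noteq> 0} \<subset> {k. k < n \<and> Y k k \<noteq> 0}"
      using sub1 sub2 i nz by blast
    have "card {k. k < n \<and> Y' k k \<noteq> 0} < card {k. k < n \<and> Y k k \<noteq> 0}"
      by (rule psubset_card_mono[OF _ sub]) auto
    from less.hyps[OF this st1] obtain ys where ys: "\<forall>a<n. \<forall>a'<n. Y' a a' = (\<Sum>y\<leftarrow>ys. y a * cnj (y a'))" by blast
    obtain y where y: "\<forall>a<n. \<forall>a'<n. Y a a' = Y' a a' + y a * cnj (y a')" using st4 by blast
    show ?thesis using ys y by (intro exI[of _ "y # ys"]) auto
  qed
qed


definition pF :: "nat \<Rightarrow> nat \<Rightarrow> (nat\<Rightarrow>nat\<Rightarrow>complex) \<Rightarrow> (nat\<Rightarrow>nat\<Rightarrow>complex) \<Rightarrow> nat \<Rightarrow> nat \<Rightarrow> complex" where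
  "pF n d R Y b b' = (\<Sum>a<n. \<Sum>a'<n. Y a a' * R (a'*d+b) (a*d+b'))"

lemma idx_lt: assumes "a < n" "b < d" shows "a*d+b < n*(d::nat)"
proof -
  have "a*d+b < Suc a * d" using assms by simp
  also have "Suc a * d \<le> n * d" using assms by (intro mult_le_mono1) simp
  finally show ?thesis .
qed

lemma bf_split: "bf (n*d) R u v = (\<Sum>a'<n. \<Sum>b<d. \<Sum>a<n. \<Sum>b'<d. cnj (u (a'*d+b)) * R (a'*d+b) (a*d+b') * v (a*d+b'))"
  unfolding bf_def by (simp only: sum_split_mult)

lemma sum4_perm: "(\<Sum>b\<in>B. \<Sum>b'\<in>B. \<Sum>a\<in>A. \<Sum>a'\<in>A. G a' b a b') = (\<Sum>a'\<in>A. \<Sum>b\<in>B. \<Sum>a\<in>A. \<Sum>b'\<in>B. G a' b a b')"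
proof -
  have "(\<Sum>b\<in>B. \<Sum>b'\<in>B. \<Sum>a\<in>A. \<Sum>a'\<in>A. G a' b a b') = (\<Sum>b\<in>B. \<Sum>a\<in>A. \<Sum>b'\<in>B. \<Sum>a'\<in>A. G a' b a b')"
    by (rule sum.cong[OF refl]) (rule sum.swap)
  also have "\<dots> = (\<Sum>b\<in>B. \<Sum>a\<in>A. \<Sum>a'\<in>A. \<Sum>b'\<in>B. G a' b a b')"
    apply (rule sum.cong[OF refl]) apply (rule sum.cong[OF refl]) by (rule sum.swap)
  also have "\<dots> = (\<Sum>b\<in>B. \<Sum>a'\<in>A. \<Sum>a\<in>A. \<Sum>b'\<in>B. G a' b a b')"
    by (rule sum.cong[OF refl]) (rule sum.swap)
  also have "\<dots> = (\<Sum>a'\<in>A. \<Sum>b\<in>B. \<Sum>a\<in>A. \<Sum>b'\<in>B. G a' b a b')"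
    by (rule sum.swap)
  finally show ?thesis .
qed

lemma pF_rank1:
  "bf d (pF n d R (\<lambda>a a'. y a * cnj (y a'))) v v
   = bf (n*d) R (\<lambda>i. y (i div d) * v (i mod d)) (\<lambda>i. y (i div d) * v (i mod d))"
proof -
  define G where "G a' b a b' = cnj (y a' * v b) * R (a'*d+b) (a*d+b') * (y a * v b')" for a' b a b'
  have "bf d (pF n d R (\<lambda>a a'. y a * cnj (y a'))) v v = (\<Sum>b<d. \<Sum>b'<d. \<Sum>a<n. \<Sum>a'<n. G a' b a b')"
    unfolding bf_def pF_def G_def by (simp add: sum_distrib_left sum_distrib_right mult_ac)
  also have "\<dots> = (\<Sum>a'<n. \<Sum>b<d. \<Sum>a<n. \<Sum>b'<d. G a' b a b')" by (rule sum4_perm)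
  also have "\<dots> = bf (n*d) R (\<lambda>i. y (i div d) * v (i mod d)) (\<lambda>i. y (i div d) * v (i mod d))"
    unfolding bf_split G_def by (intro sum.cong refl) auto
  finally show ?thesis .
qed

lemma bf_cong: "(\<And>i j. i < n \<Longrightarrow> j < n \<Longrightarrow> M i j = M' i j) \<Longrightarrow> bf n M u v = bf n M' u v"
  unfolding bf_def by (intro sum.cong refl) auto

lemma bf_sum_list: "bf d (\<lambda>b b'. \<Sum>y\<leftarrow>ys. F y b b') u v = (\<Sum>y\<leftarrow>ys. bf d (F y) u v)"
proof (induction ys)
  case Nil then show ?case unfolding bf_def by simp
next
  case (Cons y ys)
  have "bf d (\<lambda>b b'. \<Sum>y\<leftarrow>y#ys. F y b b') u v = bf d (F y) u v + bf d (\<lambda>b b'. \<Sum>y\<leftarrow>ys. F y b b') u v"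
    unfolding bf_def by (simp add: algebra_simps sum.distrib)
  then show ?case using Cons by simp
qed

lemma pF_sum_list: "pF n d R (\<lambda>a a'. \<Sum>y\<leftarrow>ys. f y a a') b b' = (\<Sum>y\<leftarrow>ys. pF n d R (f y) b b')"
proof (induction ys)
  case Nil then show ?case unfolding pF_def by simp
next
  case (Cons y ys)
  have "pF n d R (\<lambda>a a'. \<Sum>y\<leftarrow>y#ys. f y a a') b b' = pF n d R (f y) b b' + pF n d R (\<lambda>a a'. \<Sum>y\<leftarrow>ys. f y a a') b b'"
    unfolding pF_def by (simp add: algebra_simps sum.distrib)
  then show ?case using Cons by simp
qed

lemma pF_cong: "(\<And>a a'. a < n \<Longrightarrow> a' < n \<Longrightarrow> Y a a' = Y' a a') \<Longrightarrow> pF n d R Y b b' = pF n d R Y' b b'"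
  unfolding pF_def by (intro sum.cong refl) auto

lemma pF_herm: assumes Y: "herm n Y" and R: "herm (n*d) R" shows "herm d (pF n d R Y)"
  unfolding herm_def
proof (intro allI impI)
  fix b b' assume b: "b < d" and b': "b' < d"
  have "cnj (pF n d R Y b b') = (\<Sum>a<n. \<Sum>a'<n. Y a' a * R (a*d+b') (a'*d+b))"
    unfolding pF_def cnj_sum
  proof (intro sum.cong refl)
    fix a a' assume a: "a \<in> {..<n}" and a': "a' \<in> {..<n}"
    have "Y a' a = cnj (Y a a')" using hermD[OF Y, of a a'] a a' by simp
    moreover have "R (a*d+b') (a'*d+b) = cnj (R (a'*d+b) (a*d+b'))"
      using hermD[OF R, of "a'*d+b" "a*d+b'"] idx_lt a a' b b' by simp
    ultimately show "cnj (Y a a' * R (a'*d+b) (a*d+b')) = Y a' a * R (a*d+b') (a'*d+b)" by simp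
  qed
  also have "\<dots> = pF n d R Y b' b" unfolding pF_def by (rule sum.swap)
  finally show "pF n d R Y b' b = cnj (pF n d R Y b b')" by simp
qed

lemma pF_psdf: assumes Y: "psdf n Y" and R: "psdf (n*d) R" shows "psdf d (pF n d R Y)"
  unfolding psdf_def
proof (intro conjI allI)
  show "herm d (pF n d R Y)" using Y R pF_herm unfolding psdf_def by auto
next
  fix v
  obtain ys where ys: "\<forall>a<n. \<forall>a'<n. Y a a' = (\<Sum>y\<leftarrow>ys. y a * cnj (y a'))"
    using psdf_decomp[OF Y] by blast
  have "bf d (pF n d R Y) v v = bf d (\<lambda>b b'. \<Sum>y\<leftarrow>ys. pF n d R (\<lambda>a a'. y a * cnj (y a')) b b') v v"
  proof (rule bf_cong)
    fix b b' assume "b < d" "b' < d"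
    have "pF n d R Y b b' = pF n d R (\<lambda>a a'. \<Sum>y\<leftarrow>ys. y a * cnj (y a')) b b'"
      by (rule pF_cong) (use ys in auto)
    also have "\<dots> = (\<Sum>y\<leftarrow>ys. pF n d R (\<lambda>a a'. y a * cnj (y a')) b b')" by (rule pF_sum_list)
    finally show "pF n d R Y b b' = (\<Sum>y\<leftarrow>ys. pF n d R (\<lambda>a a'. y a * cnj (y a')) b b')" .
  qed
  also have "\<dots> = (\<Sum>y\<leftarrow>ys. bf d (pF n d R (\<lambda>a a'. y a * cnj (y a'))) v v)" by (rule bf_sum_list)
  also have "\<dots> = (\<Sum>y\<leftarrow>ys. bf (n*d) R (\<lambda>i. y (i div d) * v (i mod d)) (\<lambda>i. y (i div d) * v (i mod d)))"
    by (simp only: pF_rank1)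
  finally have eq: "bf d (pF n d R Y) v v = (\<Sum>y\<leftarrow>ys. bf (n*d) R (\<lambda>i. y (i div d) * v (i mod d)) (\<lambda>i. y (i div d) * v (i mod d)))" .
  have Rp: "\<And>u. 0 \<le> bf (n*d) R u u" using R unfolding psdf_def by auto
  show "0 \<le> bf d (pF n d R Y) v v" unfolding eq
    by (rule sum_list_nonneg) (use Rp in auto)
qed


lemma sum_if_const: "(\<Sum>b<d. if P then f b else 0) = (if P then (\<Sum>b<d. f b) else (0::complex))"
  by (cases P) auto

lemma block_psdf:
  assumes G: "\<And>x. x < m \<Longrightarrow> psdf d (G x)"
  shows "psdf (m*d) (\<lambda>i j. if i div d = j div d then G (i div d) (i mod d) (j mod d) else 0)"
  (is "psdf _ ?M")
  unfolding psdf_def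
proof (intro conjI allI)
  show "herm (m*d) ?M" unfolding herm_def
  proof (intro allI impI)
    fix i j assume i: "i < m*d" and j: "j < m*d"
    have d: "d > 0" using i by (cases d) auto
    show "?M j i = cnj (?M i j)"
    proof (cases "i div d = j div d")
      case True
      have x: "i div d < m" using i by (simp add: less_mult_imp_div_less)
      have "G (i div d) (j mod d) (i mod d) = cnj (G (i div d) (i mod d) (j mod d))"
        using hermD[of d "G (i div d)" "i mod d" "j mod d"] G[OF x] d unfolding psdf_def by auto
      then show ?thesis using True by simp
    qed auto
  qed
next
  fix u
  have "bf (m*d) ?M u u = (\<Sum>x'<m. \<Sum>b<d. \<Sum>x<m. \<Sum>b'<d. if x' = x then cnj (u (x'*d+b)) * G x' b b' * u (x*d+b') else 0)"
    unfolding bf_split by (auto intro!: sum.cong)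
  also have "\<dots> = (\<Sum>x'<m. \<Sum>b<d. \<Sum>b'<d. cnj (u (x'*d+b)) * G x' b b' * u (x'*d+b'))"
  proof (rule sum.cong[OF refl], rule sum.cong[OF refl])
    fix x' b assume x': "x' \<in> {..<m}" and "b \<in> {..<d}"
    show "(\<Sum>x<m. \<Sum>b'<d. if x' = x then cnj (u (x'*d+b)) * G x' b b' * u (x*d+b') else 0)
        = (\<Sum>b'<d. cnj (u (x'*d+b)) * G x' b b' * u (x'*d+b'))"
      unfolding sum_if_const using x' by (simp add: sum.delta)
  qed
  also have "\<dots> = (\<Sum>x'<m. bf d (G x') (\<lambda>b. u (x'*d+b)) (\<lambda>b. u (x'*d+b)))"
    unfolding bf_def ..
  finally have eq: "bf (m*d) ?M u u = (\<Sum>x'<m. bf d (G x') (\<lambda>b. u (x'*d+b)) (\<lambda>b. u (x'*d+b)))" .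
  have Gp: "\<And>x v. x < m \<Longrightarrow> 0 \<le> bf d (G x) v v" using G unfolding psdf_def by auto
  show "0 \<le> bf (m*d) ?M u u" unfolding eq
    by (rule sum_nonneg) (use Gp in auto)
qed


definition nrm :: "nat \<Rightarrow> (nat \<Rightarrow> complex) \<Rightarrow> real" where
  "nrm n w = (\<Sum>i<n. (cmod (w i))^2)"

lemma coord_cont [continuous_intros]: "continuous_on S (\<lambda>x::nat\<Rightarrow>complex. x i)"
  by (rule continuous_on_subset[OF continuous_on_product_coordinates]) simp

lemma bf_cong_v: "(\<And>i. i < n \<Longrightarrow> u i = u' i) \<Longrightarrow> bf n M u u = bf n M u' u'"
  unfolding bf_def by (intro sum.cong refl) auto

lemma bf_real: "herm n M \<Longrightarrow> of_real (Re (bf n M w w)) = bf n M w w"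
  using bf_herm[of n M w w] by (metis Reals_cnj_iff complex_is_Real_iff of_real_Re)

lemma bf_diag: "bf n (\<lambda>i j. if i = j then c else 0) w w = c * of_real (nrm n w)"
proof -
  have "bf n (\<lambda>i j. if i = j then c else 0) w w = (\<Sum>i<n. c * (w i * cnj (w i)))"
    unfolding bf_Mv by (intro sum.cong refl) (simp add: if_distrib if_distribR sum.delta cong: if_cong)
  also have "\<dots> = c * of_real (nrm n w)" unfolding nrm_def of_real_sum sum_distrib_left
    by (intro sum.cong refl) (metis complex_norm_square)
  finally show ?thesis .
qed

lemma bf_diff_M: "bf n (\<lambda>i j. A i j - B i j) u v = bf n A u v - bf n B u v"
  unfolding bf_def by (simp add: algebra_simps sum_subtractf)

lemma rayleigh:
  assumes h: "herm n M" and n: "n > 0"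
  shows "\<exists>l::real. \<exists>v. (\<exists>k<n. v k \<noteq> 0) \<and> (\<forall>i<n. (\<Sum>j<n. M i j * v j) = of_real l * v i)
          \<and> (\<forall>w. Re (bf n M w w) \<le> l * nrm n w)"
proof -
  define S where "S i = (if i < n then cball (0::complex) 1 else {0})" for i
  define K where "K = Pi\<^sub>E UNIV S \<inter> {v. nrm n v = 1}"
  have c1: "compact (Pi\<^sub>E UNIV S)"
  proof -
    have "compactin (product_topology (\<lambda>i. euclidean) UNIV) (Pi\<^sub>E UNIV S)"
      unfolding compactin_PiE by (auto simp: S_def)
    then show ?thesis unfolding euclidean_product_topology by simp
  qed
  have c2: "closed {v::nat\<Rightarrow>complex. nrm n v = 1}" unfolding nrm_def
    by (intro closed_Collect_eq continuous_intros)
  have cK: "compact K" unfolding K_def using c1 c2 by (rule compact_Int_closed)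
  have e0: "ev 0 \<in> K"
    unfolding K_def S_def nrm_def ev_def using n
    by (auto simp: PiE_iff) (subst sum.remove[of _ 0], auto)
  have cont: "continuous_on K (\<lambda>v. Re (bf n M v v))" unfolding bf_def
    by (intro continuous_intros)
  obtain v0 where v0K: "v0 \<in> K" and mx: "\<And>w. w \<in> K \<Longrightarrow> Re (bf n M w w) \<le> Re (bf n M v0 v0)"
    using continuous_attains_sup[OF cK _ cont] e0 by blast
  define l where "l = Re (bf n M v0 v0)"
  have nv0: "nrm n v0 = 1" using v0K unfolding K_def by auto
  have bound: "Re (bf n M w w) \<le> l * nrm n w" for w
  proof (cases "nrm n w = 0")
    case True
    then have "\<forall>i\<in>{..<n}. (cmod (w i))^2 = 0" unfolding nrm_def
      by (subst sum_nonneg_eq_0_iff[symmetric]) auto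
    then have "bf n M w w = bf n M (\<lambda>i. 0) (\<lambda>i. 0)" by (intro bf_cong_v) auto
    then show ?thesis using True by (simp add: bf_def)
  next
    case False
    define N where "N = nrm n w"
    have N0: "N > 0" using False unfolding N_def nrm_def by (simp add: sum_nonneg order_le_neq_trans)
    define c where "c = 1 / sqrt N"
    define w' where "w' i = (if i < n then of_real c * w i else 0)" for i
    have "nrm n w' = c^2 * N" unfolding nrm_def N_def w'_def sum_distrib_left
      by (intro sum.cong refl) (simp add: norm_mult power_mult_distrib)
    also have "\<dots> = 1" unfolding c_def using N0 by (simp add: power_divide)
    finally have "nrm n w' = 1" .
    moreover have "w' \<in> Pi\<^sub>E UNIV S"
    proof -
      have "cmod (w' i) \<le> 1" if "i < n" for i
      proof -
        have "(cmod (w' i))^2 \<le> nrm n w'" unfolding nrm_def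
          using that by (intro member_le_sum) auto
        then have "(cmod (w' i))^2 \<le> 1^2" using \<open>nrm n w' = 1\<close> by simp
        then show ?thesis by (rule power2_le_imp_le) simp
      qed
      then show ?thesis unfolding S_def w'_def by (auto simp: PiE_iff)
    qed
    ultimately have "w' \<in> K" unfolding K_def by simp
    then have le: "Re (bf n M w' w') \<le> l" using mx l_def by blast
    have "bf n M w' w' = bf n M (\<lambda>i. of_real c * w i) (\<lambda>i. of_real c * w i)"
      by (intro bf_cong_v) (simp add: w'_def)
    also have "\<dots> = of_real (c * c) * bf n M w w" by (simp add: bf_scale_left bf_scale_right)
    finally have "Re (bf n M w' w') = c * c * Re (bf n M w w)" by simp
    moreover have "c * c * N = 1" unfolding c_def using N0 by simp
    ultimately have "Re (bf n M w w) * (c * c) \<le> l" using le by (simp add: mult.commute)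
    then have "Re (bf n M w w) * (c * c) * N \<le> l * N" using N0 by (simp add: mult_right_mono)
    moreover have "Re (bf n M w w) * (c * c) * N = Re (bf n M w w)" using \<open>c * c * N = 1\<close>
      by (metis mult.assoc mult.right_neutral)
    ultimately have "Re (bf n M w w) \<le> l * N" by linarith
    then show ?thesis unfolding N_def .
  qed
  define P where "P i j = (if i = j then of_real l else 0) - M i j" for i j
  have hP: "herm n P" unfolding herm_def
  proof (intro allI impI)
    fix i j assume "i < n" "j < n"
    then have "M j i = cnj (M i j)" by (rule hermD[OF h])
    then show "P j i = cnj (P i j)" unfolding P_def by auto
  qed
  have bfP: "bf n P w w = of_real (l * nrm n w - Re (bf n M w w))" for w
  proof -
    have dg: "bf n (\<lambda>i j. if i = j then of_real l else 0) w w = of_real l * of_real (nrm n w)"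
      by (rule bf_diag)
    have "bf n P w w = bf n (\<lambda>i j. if i = j then of_real l else 0) w w - bf n M w w"
      unfolding P_def by (rule bf_diff_M)
    then have "bf n P w w = of_real l * of_real (nrm n w) - bf n M w w" unfolding dg .
    also have "\<dots> = of_real (l * nrm n w - Re (bf n M w w))"
      using bf_real[OF h, of w] by (metis of_real_diff of_real_mult)
    finally show ?thesis .
  qed
  have pP: "psdf n P" unfolding psdf_def
    using hP bfP bound by (auto simp: less_eq_complex_def)
  have z: "bf n P v0 v0 = 0" using bfP[of v0] nv0 l_def by simp
  have eig: "(\<Sum>j<n. M i j * v0 j) = of_real l * v0 i" if i: "i < n" for i
  proof -
    have "(\<Sum>j<n. P i j * v0 j) = 0" by (rule psdf_kernel[OF pP z i])
    moreover have "(\<Sum>j<n. P i j * v0 j) = of_real l * v0 i - (\<Sum>j<n. M i j * v0 j)"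
    proof -
      have "(\<Sum>j<n. P i j * v0 j) = (\<Sum>j<n. (if i = j then of_real l * v0 j else 0)) - (\<Sum>j<n. M i j * v0 j)"
        unfolding P_def sum_subtractf[symmetric] by (intro sum.cong refl) (simp add: algebra_simps)
      also have "(\<Sum>j<n. (if i = j then of_real l * v0 j else 0)) = of_real l * v0 i"
        using i by (simp add: sum.delta)
      finally show ?thesis .
    qed
    ultimately show ?thesis by simp
  qed
  have nz: "\<exists>k<n. v0 k \<noteq> 0"
  proof (rule ccontr)
    assume "\<not> (\<exists>k<n. v0 k \<noteq> 0)"
    then have "nrm n v0 = 0" unfolding nrm_def by simp
    then show False using nv0 by simp
  qed
  show ?thesis using nz eig bound by blast
qed


lemma smax_bound:
  assumes X: "psd n X" and n: "n > 0"
  shows "Re (bf n (\<lambda>i j. X $$ (i,j)) w w) \<le> smax X * nrm n w"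
proof -
  have Xc: "X \<in> carrier_mat n n" and pX: "psdf n (\<lambda>i j. X $$ (i,j))" using X psd_iff by auto
  have dX: "dagger X = X" using X unfolding psd_def by auto
  have h: "herm n (\<lambda>i j. X $$ (i,j))" using pX unfolding psdf_def by auto
  obtain l v where nz: "\<exists>k<n. v k \<noteq> 0" and eig: "\<forall>i<n. (\<Sum>j<n. X $$ (i,j) * v j) = of_real l * v i"
    and bd: "\<forall>w. Re (bf n (\<lambda>i j. X $$ (i,j)) w w) \<le> l * nrm n w"
    using rayleigh[OF h n] by blast
  define vv where "vv = vec n v"
  have vvc: "vv \<in> carrier_vec n" unfolding vv_def by simp
  have vvnz: "vv \<noteq> 0\<^sub>v n"
  proof
    assume "vv = 0\<^sub>v n"
    moreover obtain k where "k < n" "v k \<noteq> 0" using nz by blast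
    ultimately show False unfolding vv_def by (metis index_vec index_zero_vec(1))
  qed
  have Xv: "X *\<^sub>v vv = of_real l \<cdot>\<^sub>v vv"
  proof (rule eq_vecI)
    fix i assume "i < dim_vec (of_real l \<cdot>\<^sub>v vv)"
    then have i: "i < n" using vvc by simp
    have "(X *\<^sub>v vv) $ i = (\<Sum>j<n. X $$ (i,j) * v j)"
      using Xc i unfolding vv_def by (simp add: scalar_prod_def atLeast0LessThan)
    also have "\<dots> = (of_real l \<cdot>\<^sub>v vv) $ i" using eig i unfolding vv_def by simp
    finally show "(X *\<^sub>v vv) $ i = (of_real l \<cdot>\<^sub>v vv) $ i" .
  qed (use Xc vvc in simp)
  have XXv: "(dagger X * X) *\<^sub>v vv = (of_real l * of_real l) \<cdot>\<^sub>v vv"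
  proof -
    have "(dagger X * X) *\<^sub>v vv = X *\<^sub>v (X *\<^sub>v vv)" unfolding dX using Xc vvc by simp
    also have "\<dots> = X *\<^sub>v (of_real l \<cdot>\<^sub>v vv)" unfolding Xv ..
    also have "\<dots> = of_real l \<cdot>\<^sub>v (X *\<^sub>v vv)" by (rule mult_mat_vec[OF Xc vvc])
    also have "\<dots> = of_real l \<cdot>\<^sub>v (of_real l \<cdot>\<^sub>v vv)" unfolding Xv ..
    also have "\<dots> = (of_real l * of_real l) \<cdot>\<^sub>v vv" by (rule smult_smult_assoc)
    finally show ?thesis .
  qed
  have XXc: "dagger X * X \<in> carrier_mat n n" unfolding dX using Xc by simp
  have ev: "eigenvalue (dagger X * X) (of_real l * of_real l)"
  proof -
    have "dim_row (dagger X) = n" using dX Xc by simp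
    then show ?thesis unfolding eigenvalue_def eigenvector_def using XXv vvc vvnz by auto
  qed
  have fin: "finite (Collect (eigenvalue (dagger X * X)))"
    using card_finite_spectrum(1)[OF XXc] unfolding spectrum_def .
  have mem: "sqrt (Re (of_real l * of_real l)) \<in> (\<lambda>k. sqrt (Re k)) ` Collect (eigenvalue (dagger X * X))"
    by (rule imageI) (use ev in simp)
  have "sqrt (Re (of_real l * of_real l)) \<le> smax X" unfolding smax_def
    by (rule Max_ge[OF finite_imageI[OF fin] mem])
  moreover have "sqrt (Re (of_real l * of_real l)) = \<bar>l\<bar>" by (simp flip: of_real_mult)
  ultimately have ls: "l \<le> smax X" by simp
  have "nrm n w \<ge> 0" unfolding nrm_def by (simp add: sum_nonneg)
  then have "l * nrm n w \<le> smax X * nrm n w" using ls by (simp add: mult_right_mono)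
  then show ?thesis using bd by (meson order_trans)
qed

lemma bf_plus:
  "bf (m+m') P u v = bf m P u v + (\<Sum>i<m. \<Sum>j<m'. cnj (u i) * P i (m+j) * v (m+j))
     + (\<Sum>i<m'. \<Sum>j<m. cnj (u (m+i)) * P (m+i) j * v j)
     + bf m' (\<lambda>i j. P (m+i) (m+j)) (\<lambda>i. u (m+i)) (\<lambda>i. v (m+i))"
  unfolding bf_def sum_lessThan_plus sum.distrib by (simp add: add_ac)

definition mrg :: "nat \<Rightarrow> complex mat \<Rightarrow> complex mat" where
  "mrg N M = mat N N (\<lambda>(i,j). M $$ (i,j) + M $$ (i+N, j+N))"

lemma psd_zero: "psd N (0\<^sub>m N N)"
  unfolding psd_iff psdf_def herm_def bf_def by auto

lemma psd_dsum: assumes S: "psd N S" and T: "psd N T" shows "psd (N+N) (dsum S T)"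
proof -
  have Sc: "S \<in> carrier_mat N N" and pS: "psdf N (\<lambda>i j. S $$ (i,j))" using S psd_iff by auto
  have Tc: "T \<in> carrier_mat N N" and pT: "psdf N (\<lambda>i j. T $$ (i,j))" using T psd_iff by auto
  have ent: "dsum S T $$ (i,j) = (if i < N then if j < N then S $$ (i,j) else 0 else if j < N then 0 else T $$ (i-N, j-N))"
    if "i < N+N" "j < N+N" for i j
    using that Sc Tc unfolding dsum_def by simp
  have hS: "herm N (\<lambda>i j. S $$ (i,j))" and hT: "herm N (\<lambda>i j. T $$ (i,j))" using pS pT psdf_def by auto
  have herm: "herm (N+N) (\<lambda>i j. dsum S T $$ (i,j))" unfolding herm_def
  proof (intro allI impI)
    fix i j assume i: "i < N+N" and j: "j < N+N"
    show "dsum S T $$ (j,i) = cnj (dsum S T $$ (i,j))"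
      unfolding ent[OF i j] ent[OF j i] using hermD[OF hS, of i j] hermD[OF hT, of "i-N" "j-N"] i j by auto
  qed
  have "0 \<le> bf (N+N) (\<lambda>i j. dsum S T $$ (i,j)) u u" for u
  proof -
    have "bf (N+N) (\<lambda>i j. dsum S T $$ (i,j)) u u = bf N (\<lambda>i j. S $$ (i,j)) u u + bf N (\<lambda>i j. T $$ (i,j)) (\<lambda>i. u (N+i)) (\<lambda>i. u (N+i))"
    proof -
      have "bf N (\<lambda>i j. dsum S T $$ (i,j)) u u = bf N (\<lambda>i j. S $$ (i,j)) u u"
        by (rule bf_cong) (simp add: ent)
      moreover have "bf N (\<lambda>i j. dsum S T $$ (N+i, N+j)) (\<lambda>i. u (N+i)) (\<lambda>i. u (N+i)) = bf N (\<lambda>i j. T $$ (i,j)) (\<lambda>i. u (N+i)) (\<lambda>i. u (N+i))"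
        by (rule bf_cong) (simp add: ent)
      ultimately show ?thesis unfolding bf_plus by (simp add: ent)
    qed
    then show ?thesis using pS pT unfolding psdf_def by (simp add: add_nonneg_nonneg)
  qed
  then show ?thesis unfolding psd_iff psdf_def using herm Sc Tc by (simp add: dsum_def)
qed

lemma mrg_dsum: assumes "S \<in> carrier_mat N N" "T \<in> carrier_mat N N"
  shows "mrg N (dsum S T) = S + T"
  using assms unfolding mrg_def dsum_def by (intro eq_matI) auto


lemma tensor_id_mrg:
  assumes P: "P \<in> carrier_mat ((N+N)*k) ((N+N)*k)" and i: "i < N*k" and j: "j < N*k"
  shows "tensor_id (mrg N) (N+N) N k P $$ (i,j) = P $$ (i,j) + P $$ (N*k+i, N*k+j)"
proof -
  have k: "k > 0" using i by (cases k) auto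
  have id: "i div k < N" "j div k < N" using i j by (simp_all add: less_mult_imp_div_less)
  have e1: "(i div k + N) * k + i mod k = N*k+i" "(j div k + N) * k + j mod k = N*k+j"
    by (simp_all add: algebra_simps)
  show ?thesis unfolding tensor_id_def mrg_def blk_def using i j id k
    by (simp add: e1)
qed

lemma tpcpm_mrg: "tpcpm (N+N) N (mrg N)"
  unfolding tpcpm_def
proof (intro conjI ballI allI impI)
  fix A :: "complex mat" assume A: "A \<in> carrier_mat (N+N) (N+N)"
  show "mrg N A \<in> carrier_mat N N" unfolding mrg_def by simp
  show "mtr (mrg N A) = mtr A"
  proof -
    have "mtr (mrg N A) = (\<Sum>i<N. A $$ (i,i) + A $$ (N+i, N+i))"
      unfolding mtr_def mrg_def by (simp add: add.commute)
    also have "\<dots> = (\<Sum>i<N+N. A $$ (i,i))" unfolding sum_lessThan_plus sum.distrib ..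
    finally show ?thesis using A unfolding mtr_def by simp
  qed
  fix B :: "complex mat" assume B: "B \<in> carrier_mat (N+N) (N+N)"
  show "mrg N (A + B) = mrg N A + mrg N B"
    using A B unfolding mrg_def by (intro eq_matI) auto
next
  fix A :: "complex mat" and c :: complex assume A: "A \<in> carrier_mat (N+N) (N+N)"
  show "mrg N (c \<cdot>\<^sub>m A) = c \<cdot>\<^sub>m mrg N A"
    using A unfolding mrg_def by (intro eq_matI) (auto simp: algebra_simps)
next
  fix k :: nat and P :: "complex mat" assume pP: "psd ((N+N)*k) P"
  define M where "M = N*k"
  have MM: "(N+N)*k = M+M" unfolding M_def by (simp add: algebra_simps)
  have Pc: "P \<in> carrier_mat (M+M) (M+M)" and pf: "psdf (M+M) (\<lambda>i j. P $$ (i,j))"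
    using pP unfolding psd_iff MM by auto
  have hP: "herm (M+M) (\<lambda>i j. P $$ (i,j))" using pf psdf_def by auto
  define Q where "Q = tensor_id (mrg N) (N+N) N k P"
  have Qc: "Q \<in> carrier_mat M M" unfolding Q_def tensor_id_def M_def by simp
  have ent: "Q $$ (i,j) = P $$ (i,j) + P $$ (M+i, M+j)" if "i < M" "j < M" for i j
    unfolding Q_def M_def using tensor_id_mrg[OF Pc[folded MM] that[unfolded M_def]] .
  have herm: "herm M (\<lambda>i j. Q $$ (i,j))" unfolding herm_def
  proof (intro allI impI)
    fix i j assume i: "i < M" and j: "j < M"
    have "P $$ (j,i) = cnj (P $$ (i,j))" using hermD[OF hP, of i j] i j by simp
    moreover have "P $$ (M+j,M+i) = cnj (P $$ (M+i,M+j))" using hermD[OF hP, of "M+i" "M+j"] i j by simp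
    ultimately show "Q $$ (j,i) = cnj (Q $$ (i,j))" using ent i j by simp
  qed
  have "0 \<le> bf M (\<lambda>i j. Q $$ (i,j)) u u" for u
  proof -
    define u1 where "u1 i = (if i < M then u i else 0)" for i
    define u2 where "u2 i = (if i < M then 0 else u (i - M))" for i
    have "bf M (\<lambda>i j. Q $$ (i,j)) u u = bf M (\<lambda>i j. P $$ (i,j) + P $$ (M+i, M+j)) u u"
      by (rule bf_cong) (simp add: ent)
    also have "\<dots> = bf M (\<lambda>i j. P $$ (i,j)) u u + bf M (\<lambda>i j. P $$ (M+i, M+j)) u u"
      unfolding bf_def by (simp add: algebra_simps sum.distrib)
    also have "bf M (\<lambda>i j. P $$ (i,j)) u u = bf (M+M) (\<lambda>i j. P $$ (i,j)) u1 u1"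
    proof -
      have "bf M (\<lambda>i j. P $$ (i,j)) u1 u1 = bf M (\<lambda>i j. P $$ (i,j)) u u" by (rule bf_cong_v) (simp add: u1_def)
      then show ?thesis unfolding bf_plus by (simp add: u1_def bf_def)
    qed
    also have "bf M (\<lambda>i j. P $$ (M+i, M+j)) u u = bf (M+M) (\<lambda>i j. P $$ (i,j)) u2 u2"
      unfolding bf_plus by (simp add: u2_def bf_def)
    finally show ?thesis using pf unfolding psdf_def by (simp add: add_nonneg_nonneg)
  qed
  then show "psd (N * k) (tensor_id (mrg N) (N + N) N k P)"
    using herm Qc unfolding Q_def M_def psd_iff psdf_def by auto
qed

lemma D_mono:
  assumes rel: "rel_K_entropy b D" and S: "psd N S" and T: "psd N T" and T': "psd N T'"
    and dif: "psd N (T' - T)"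
  shows "D S T' \<le> D S T"
proof -
  have Sc: "S \<in> carrier_mat N N" and Tc: "T \<in> carrier_mat N N" and T'c: "T' \<in> carrier_mat N N"
    using S T T' psd_iff by auto
  have a: "\<And>n m E S T. tpcpm n m E \<and> psd n S \<and> psd n T \<longrightarrow> D (E S) (E T) \<le> D S T"
    and bb: "\<And>n n' S T T'. psd n S \<and> psd n T \<and> psd n' T' \<longrightarrow> D (dsum S (0\<^sub>m n' n')) (dsum T T') = D S T"
    using rel unfolding rel_K_entropy_def by blast+
  have d1: "psd (N+N) (dsum S (0\<^sub>m N N))" by (rule psd_dsum[OF S psd_zero])
  have d2: "psd (N+N) (dsum T (T' - T))" by (rule psd_dsum[OF T dif])
  have m1: "mrg N (dsum S (0\<^sub>m N N)) = S" using mrg_dsum[OF Sc, of "0\<^sub>m N N"] Sc by simp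
  have m2: "mrg N (dsum T (T' - T)) = T'"
  proof -
    have "mrg N (dsum T (T' - T)) = T + (T' - T)" by (rule mrg_dsum[OF Tc]) (use T'c Tc in auto)
    also have "\<dots> = T'" using Tc T'c by (intro eq_matI) auto
    finally show ?thesis .
  qed
  have "D S T' = D (mrg N (dsum S (0\<^sub>m N N))) (mrg N (dsum T (T' - T)))" unfolding m1 m2 ..
  also have "\<dots> \<le> D (dsum S (0\<^sub>m N N)) (dsum T (T' - T))" using a tpcpm_mrg d1 d2 by blast
  also have "\<dots> = D S T" using bb S T dif by blast
  finally show ?thesis .
qed


lemma psdf_cong: assumes "\<And>i j. i < N \<Longrightarrow> j < N \<Longrightarrow> M i j = M' i j" and "psdf N M" shows "psdf N M'"
proof -
  have hM: "herm N M" using assms unfolding psdf_def by auto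
  have "herm N M'" unfolding herm_def
  proof (intro allI impI)
    fix i j assume ij: "i < N" "j < N"
    have "M j i = cnj (M i j)" by (rule hermD[OF hM ij])
    then show "M' j i = cnj (M' i j)" using assms(1) ij by simp
  qed
  moreover have "0 \<le> bf N M' u u" for u
  proof -
    have "bf N M' u u = bf N M u u" by (rule bf_cong) (use assms(1) in auto)
    moreover have "0 \<le> bf N M u u" using assms(2) unfolding psdf_def by auto
    ultimately show ?thesis by simp
  qed
  ultimately show ?thesis unfolding psdf_def by auto
qed

lemma bf_scale_M: "bf n (\<lambda>i j. k * M i j) u v = k * bf n M u v"
  unfolding bf_def by (simp add: sum_distrib_left algebra_simps)

lemma psdf_scale: assumes "psdf N M" "k \<ge> 0" shows "psdf N (\<lambda>i j. of_real k * M i j)"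
proof -
  have hM: "herm N M" using assms unfolding psdf_def by auto
  have "herm N (\<lambda>i j. of_real k * M i j)" unfolding herm_def
  proof (intro allI impI)
    fix i j assume ij: "i < N" "j < N"
    have "M j i = cnj (M i j)" by (rule hermD[OF hM ij])
    then show "of_real k * M j i = cnj (of_real k * M i j)" by simp
  qed
  moreover have "0 \<le> bf N (\<lambda>i j. of_real k * M i j) u u" for u
  proof -
    have "0 \<le> bf N M u u" using assms unfolding psdf_def by auto
    moreover have "0 \<le> (of_real k :: complex)" using assms by (simp add: less_eq_complex_def)
    ultimately show ?thesis unfolding bf_scale_M by (rule mult_nonneg_nonneg[rotated])
  qed
  ultimately show ?thesis unfolding psdf_def by auto
qed

lemma pF_sum: "(\<Sum>x<m. pF n d R (Y x) b b') = pF n d R (\<lambda>a a'. \<Sum>x<m. Y x a a') b b'"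
proof -
  have "(\<Sum>x<m. pF n d R (Y x) b b') = (\<Sum>x<m. \<Sum>a<n. \<Sum>a'<n. Y x a a' * R (a'*d+b) (a*d+b'))"
    unfolding pF_def ..
  also have "\<dots> = (\<Sum>a<n. \<Sum>x<m. \<Sum>a'<n. Y x a a' * R (a'*d+b) (a*d+b'))" by (rule sum.swap)
  also have "\<dots> = (\<Sum>a<n. \<Sum>a'<n. \<Sum>x<m. Y x a a' * R (a'*d+b) (a*d+b'))"
    by (rule sum.cong[OF refl]) (rule sum.swap)
  also have "\<dots> = pF n d R (\<lambda>a a'. \<Sum>x<m. Y x a a') b b'"
    unfolding pF_def by (simp add: sum_distrib_right)
  finally show ?thesis .
qed

lemma pF_id: "pF n d R (\<lambda>a a'. if a = a' then 1 else 0) b b' = (\<Sum>a<n. R (a*d+b) (a*d+b'))"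
  unfolding pF_def by (intro sum.cong refl) (simp add: if_distrib if_distribR sum.delta cong: if_cong)

lemma pF_lin: "pF n d R (\<lambda>a a'. A a a' - k * B a a') b b' = pF n d R A b b' - k * pF n d R B b b'"
  unfolding pF_def by (simp add: algebra_simps sum_subtractf sum_distrib_left)

lemma psdf_id: "psdf n (\<lambda>a a'. if a = a' then 1 else 0)"
  unfolding psdf_def herm_def using bf_diag[of n 1] by (auto simp: nrm_def sum_nonneg less_eq_complex_def)

lemma blkmtr:
  assumes X: "X \<in> carrier_mat n n"
  shows "mtr (X * blk n d \<rho> b b') = pF n d (\<lambda>i j. \<rho> $$ (i,j)) (\<lambda>a a'. X $$ (a,a')) b b'"
  unfolding mtr_def pF_def using X
  by (intro sum.cong refl) (auto simp: blk_def scalar_prod_def atLeast0LessThan intro!: sum.cong)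


theorem lemma2:
  fixes b :: real and D :: "complex mat \<Rightarrow> complex mat \<Rightarrow> ereal"
    and dA dB :: nat and Xs :: "complex mat list" and \<rho> :: "complex mat"
  assumes "0 < b" and "b \<noteq> 1"
    and "rel_K_entropy b D"
    and "povm dA Xs"
    and "density (dA * dB) \<rho>"
  shows "H_K1 D (length Xs) dB (tensor_id (meas_map Xs) dA (length Xs) dB \<rho>)
           \<ge> ereal (log b (1 / cX Xs)) \<and>
         H_K2 D (length Xs) dB (tensor_id (meas_map Xs) dA (length Xs) dB \<rho>)
           \<ge> ereal (log b (1 / cX Xs))"
proof -
  note b0 = assms(1) and b1 = assms(2) and rel = assms(3) and pv = assms(4) and dens = assms(5)
  define m where "m = length Xs"
  define n where "n = dA"
  define d where "d = dB"
  define \<rho>f where "\<rho>f i j = \<rho> $$ (i,j)" for i j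
  define Xf where "Xf x a a' = Xs ! x $$ (a,a')" for x a a'
  define R where "R = tensor_id (meas_map Xs) n m d \<rho>"
  define c where "c = cX Xs"
  have \<rho>c: "\<rho> \<in> carrier_mat (n*d) (n*d)" and p\<rho>: "psdf (n*d) \<rho>f"
    using dens unfolding density_def psd_iff n_def d_def \<rho>f_def by auto
  have tr\<rho>: "mtr \<rho> = 1" using dens unfolding density_def by auto
  have nd0: "n * d \<noteq> 0"
  proof
    assume "n * d = 0"
    then have "dim_row \<rho> = 0" using \<rho>c by simp
    then have "mtr \<rho> = 0" unfolding mtr_def by simp
    then show False using tr\<rho> by simp
  qed
  then have n0: "n > 0" and d0: "d > 0" by auto
  have Xpsd: "psd n (Xs ! x)" if "x < m" for x
    using pv that unfolding povm_def m_def n_def by auto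
  have Xc: "Xs ! x \<in> carrier_mat n n" if "x < m" for x using Xpsd[OF that] unfolding psd_iff by auto
  have Xpsdf: "psdf n (Xf x)" if "x < m" for x using Xpsd[OF that] unfolding psd_iff Xf_def by auto
  have sumX: "(\<Sum>x<m. Xf x a a') = (if a = a' then 1 else 0)" if "a < n" "a' < n" for a a'
  proof -
    have eq: "mat n n (\<lambda>ij. \<Sum>j<m. (Xs ! j) $$ ij) = 1\<^sub>m n" using pv unfolding povm_def m_def n_def by auto
    have "mat n n (\<lambda>ij. \<Sum>j<m. (Xs ! j) $$ ij) $$ (a,a') = 1\<^sub>m n $$ (a,a')" unfolding eq ..
    then show ?thesis using that unfolding Xf_def by simp
  qed
  have m0: "m > 0"
  proof (rule ccontr)
    assume "\<not> m > 0"
    then have "m = 0" by simp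
    then show False using sumX[OF n0 n0] by simp
  qed
  have Rc: "R \<in> carrier_mat (m*d) (m*d)" unfolding R_def tensor_id_def by simp
  have Rent: "R $$ (i,j) = (if i div d = j div d then pF n d \<rho>f (Xf (i div d)) (i mod d) (j mod d) else 0)"
    if ij: "i < m*d" "j < m*d" for i j
  proof -
    have id: "i div d < m" "j div d < m" using ij by (simp_all add: less_mult_imp_div_less)
    have "R $$ (i,j) = meas_map Xs (blk n d \<rho> (i mod d) (j mod d)) $$ (i div d, j div d)"
      unfolding R_def tensor_id_def using ij by simp
    also have "\<dots> = (if i div d = j div d then mtr (Xs ! (i div d) * blk n d \<rho> (i mod d) (j mod d)) else 0)"
      unfolding meas_map_def using id m_def by simp
    also have "\<dots> = (if i div d = j div d then pF n d \<rho>f (Xf (i div d)) (i mod d) (j mod d) else 0)"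
    proof -
      have eqA: "mtr (Xs ! (i div d) * blk n d \<rho> (i mod d) (j mod d)) = pF n d \<rho>f (Xf (i div d)) (i mod d) (j mod d)"
        using blkmtr[OF Xc[OF id(1)], of d \<rho> "i mod d" "j mod d"] unfolding \<rho>f_def Xf_def by simp
      show ?thesis unfolding eqA ..
    qed
    finally show ?thesis .
  qed
  have GX: "psdf d (pF n d \<rho>f (Xf x))" if "x < m" for x by (rule pF_psdf[OF Xpsdf[OF that] p\<rho>])
  have Rpsd: "psd (m*d) R"
  proof -
    have bp: "psdf (m*d) (\<lambda>i j. if i div d = j div d then pF n d \<rho>f (Xf (i div d)) (i mod d) (j mod d) else 0)"
      by (rule block_psdf) (rule GX)
    have "psdf (m*d) (\<lambda>i j. R $$ (i,j))" by (rule psdf_cong[OF _ bp]) (simp add: Rent)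
    then show ?thesis unfolding psd_iff using Rc by simp
  qed
  define \<sigma>f where "\<sigma>f b b' = (\<Sum>a<n. \<rho>f (a*d+b) (a*d+b'))" for b b'
  have sumpF: "(\<Sum>x<m. pF n d \<rho>f (Xf x) b b') = \<sigma>f b b'" for b b'
  proof -
    have "(\<Sum>x<m. pF n d \<rho>f (Xf x) b b') = pF n d \<rho>f (\<lambda>a a'. \<Sum>x<m. Xf x a a') b b'" by (rule pF_sum)
    also have "\<dots> = pF n d \<rho>f (\<lambda>a a'. if a = a' then 1 else 0) b b'" by (rule pF_cong) (simp add: sumX)
    also have "\<dots> = \<sigma>f b b'" unfolding pF_id \<sigma>f_def ..
    finally show ?thesis .
  qed
  have \<sigma>pF: "\<sigma>f b b' = pF n d \<rho>f (\<lambda>a a'. if a = a' then 1 else 0) b b'" for b b'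
    unfolding pF_id \<sigma>f_def ..
  have \<sigma>psdf: "psdf d \<sigma>f"
    using pF_psdf[OF psdf_id p\<rho>] unfolding \<sigma>pF[abs_def] by simp
  define \<sigma> where "\<sigma> = ptrA m d R"
  have \<sigma>c: "\<sigma> \<in> carrier_mat d d" unfolding \<sigma>_def ptrA_def by simp
  have \<sigma>ent: "\<sigma> $$ (b,b') = \<sigma>f b b'" if "b < d" "b' < d" for b b'
  proof -
    have "\<sigma> $$ (b,b') = (\<Sum>x<m. R $$ (x*d+b, x*d+b'))" unfolding \<sigma>_def ptrA_def using that by simp
    also have "\<dots> = (\<Sum>x<m. pF n d \<rho>f (Xf x) b b')"
    proof (rule sum.cong[OF refl])
      fix x assume "x \<in> {..<m}"
      then have x: "x < m" by simp
      have l1: "x*d+b < m*d" "x*d+b' < m*d" using idx_lt[OF x] that by auto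
      show "R $$ (x*d+b, x*d+b') = pF n d \<rho>f (Xf x) b b'" unfolding Rent[OF l1] using that by simp
    qed
    also have "\<dots> = \<sigma>f b b'" by (rule sumpF)
    finally show ?thesis .
  qed
  have trsum: "(\<Sum>b<d. \<sigma>f b b) = 1"
  proof -
    have "(\<Sum>b<d. \<sigma>f b b) = (\<Sum>a<n. \<Sum>b<d. \<rho>f (a*d+b) (a*d+b))" unfolding \<sigma>f_def by (rule sum.swap)
    also have "\<dots> = (\<Sum>i<n*d. \<rho>f i i)" by (rule sum_split_mult[symmetric])
    also have "\<dots> = mtr \<rho>" unfolding mtr_def \<rho>f_def using \<rho>c by simp
    finally show ?thesis using tr\<rho> by simp
  qed
  have \<sigma>dens: "density d \<sigma>"
  proof -
    have "psdf d (\<lambda>i j. \<sigma> $$ (i,j))" by (rule psdf_cong[OF _ \<sigma>psdf]) (simp add: \<sigma>ent)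
    moreover have "mtr \<sigma> = 1" unfolding mtr_def using \<sigma>c \<sigma>ent trsum by simp
    ultimately show ?thesis unfolding density_def psd_iff using \<sigma>c by simp
  qed
  have Rdens: "density (m*d) R"
  proof -
    have "mtr R = (\<Sum>i<m*d. R $$ (i,i))" unfolding mtr_def using Rc by simp
    also have "\<dots> = (\<Sum>x<m. \<Sum>b<d. R $$ (x*d+b, x*d+b))" by (rule sum_split_mult)
    also have "\<dots> = (\<Sum>x<m. \<Sum>b<d. pF n d \<rho>f (Xf x) b b)"
    proof (intro sum.cong refl)
      fix x b assume "x \<in> {..<m}" "b \<in> {..<d}"
      then have l1: "x*d+b < m*d" using idx_lt by auto
      show "R $$ (x*d+b, x*d+b) = pF n d \<rho>f (Xf x) b b" unfolding Rent[OF l1 l1] using \<open>b \<in> {..<d}\<close> by simp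
    qed
    also have "\<dots> = (\<Sum>b<d. \<Sum>x<m. pF n d \<rho>f (Xf x) b b)" by (rule sum.swap)
    also have "\<dots> = (\<Sum>b<d. \<sigma>f b b)" unfolding sumpF ..
    finally show ?thesis using trsum Rpsd unfolding density_def by simp
  qed
  have smx: "smax (Xs ! x) \<le> c" if "x < m" for x
    unfolding c_def cX_def using that m_def by (intro Max_ge) auto
  have Rbound: "Re (bf n (Xf x) u u) \<le> c * nrm n u" if x: "x < m" for x u
  proof -
    have "Re (bf n (Xf x) u u) \<le> smax (Xs ! x) * nrm n u"
      using smax_bound[OF Xpsd[OF x] n0] unfolding Xf_def by simp
    also have "\<dots> \<le> c * nrm n u" using smx[OF x] by (intro mult_right_mono) (auto simp: nrm_def sum_nonneg)
    finally show ?thesis .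
  qed
  have c0: "c > 0"
  proof (rule ccontr)
    assume "\<not> c > 0"
    then have "c \<le> 0" by simp
    have nrm1: "nrm n (ev 0) = 1" unfolding nrm_def ev_def using n0 by (subst sum.remove[of _ 0]) auto
    have "Re (Xf x 0 0) \<le> 0" if "x < m" for x
      using Rbound[OF that, of "ev 0"] bf_ev[OF n0, of "Xf x"] nrm1 \<open>c \<le> 0\<close> by simp
    then have "(\<Sum>x<m. Re (Xf x 0 0)) \<le> 0" by (intro sum_nonpos) auto
    moreover have "(\<Sum>x<m. Re (Xf x 0 0)) = 1" using sumX[OF n0 n0] by (simp flip: Re_sum)
    ultimately show False by simp
  qed
  define Ym where "Ym x a a' = (if a = a' then 1 else 0) - of_real (1/c) * Xf x a a'" for x a a'
  have Ypsdf: "psdf n (Ym x)" if x: "x < m" for x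
  proof -
    have hX: "herm n (Xf x)" using Xpsdf[OF x] unfolding psdf_def by auto
    have "herm n (Ym x)" unfolding herm_def
    proof (intro allI impI)
      fix a a' assume aa: "a < n" "a' < n"
      have "Xf x a' a = cnj (Xf x a a')" by (rule hermD[OF hX aa])
      then show "Ym x a' a = cnj (Ym x a a')" unfolding Ym_def by auto
    qed
    moreover have "0 \<le> bf n (Ym x) u u" for u
    proof -
      have "bf n (Ym x) u u = bf n (\<lambda>a a'. if a = a' then 1 else 0) u u - bf n (\<lambda>a a'. of_real (1/c) * Xf x a a') u u"
        unfolding Ym_def by (rule bf_diff_M)
      also have "\<dots> = of_real (nrm n u) - of_real (1/c) * of_real (Re (bf n (Xf x) u u))"
        unfolding bf_scale_M bf_real[OF hX] using bf_diag[of n 1 u] by simp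
      also have "\<dots> = of_real (nrm n u - Re (bf n (Xf x) u u) / c)" by simp
      finally have eq: "bf n (Ym x) u u = of_real (nrm n u - Re (bf n (Xf x) u u) / c)" .
      have "Re (bf n (Xf x) u u) / c \<le> nrm n u"
        using Rbound[OF x, of u] c0 by (simp add: divide_le_eq mult.commute)
      then show ?thesis unfolding eq by (simp add: less_eq_complex_def)
    qed
    ultimately show ?thesis unfolding psdf_def by auto
  qed
  define T where "T = complex_of_real (1/c) \<cdot>\<^sub>m R"
  define T' where "T' = kron (1\<^sub>m m) \<sigma>"
  have T'c: "T' \<in> carrier_mat (m*d) (m*d)" unfolding T'_def kron_def using \<sigma>c by simp
  have Tc: "T \<in> carrier_mat (m*d) (m*d)" unfolding T_def using Rc by simp
  have T'ent: "T' $$ (i,j) = (if i div d = j div d then \<sigma>f (i mod d) (j mod d) else 0)"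
    if ij: "i < m*d" "j < m*d" for i j
  proof -
    have id: "i div d < m" "j div d < m" using ij by (simp_all add: less_mult_imp_div_less)
    have md: "i mod d < d" "j mod d < d" using d0 by simp_all
    show ?thesis unfolding T'_def kron_def using ij id md \<sigma>c \<sigma>ent by simp
  qed
  have Tent: "T $$ (i,j) = of_real (1/c) * R $$ (i,j)" if ij: "i < m*d" "j < m*d" for i j
    unfolding T_def using ij Rc by simp
  have T'psd: "psd (m*d) T'"
  proof -
    have bp: "psdf (m*d) (\<lambda>i j. if i div d = j div d then \<sigma>f (i mod d) (j mod d) else 0)"
      by (rule block_psdf) (rule \<sigma>psdf)
    have "psdf (m*d) (\<lambda>i j. T' $$ (i,j))" by (rule psdf_cong[OF _ bp]) (simp add: T'ent)
    then show ?thesis unfolding psd_iff using T'c by simp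
  qed
  have Tpsd: "psd (m*d) T"
  proof -
    have "psdf (m*d) (\<lambda>i j. of_real (1/c) * R $$ (i,j))"
      using Rpsd psdf_scale[of "m*d" "\<lambda>i j. R $$ (i,j)" "1/c"] c0 unfolding psd_iff by simp
    then have "psdf (m*d) (\<lambda>i j. T $$ (i,j))" by (rule psdf_cong[rotated]) (simp add: Tent)
    then show ?thesis unfolding psd_iff using Tc by simp
  qed
  have difpsd: "psd (m*d) (T' - T)"
  proof -
    have GY: "psdf d (pF n d \<rho>f (Ym x))" if "x < m" for x by (rule pF_psdf[OF Ypsdf[OF that] p\<rho>])
    have ent: "(T' - T) $$ (i,j) = (if i div d = j div d then pF n d \<rho>f (Ym (i div d)) (i mod d) (j mod d) else 0)"
      if ij: "i < m*d" "j < m*d" for i j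
    proof -
      have "(T' - T) $$ (i,j) = T' $$ (i,j) - T $$ (i,j)" using ij Tc by simp
      also have "\<dots> = (if i div d = j div d then pF n d \<rho>f (Ym (i div d)) (i mod d) (j mod d) else 0)"
        unfolding T'ent[OF ij] Tent[OF ij] Rent[OF ij] Ym_def pF_lin \<sigma>pF by simp
      finally show ?thesis .
    qed
    have bp: "psdf (m*d) (\<lambda>i j. if i div d = j div d then pF n d \<rho>f (Ym (i div d)) (i mod d) (j mod d) else 0)"
      by (rule block_psdf) (rule GY)
    have "psdf (m*d) (\<lambda>i j. (T' - T) $$ (i,j))" by (rule psdf_cong[OF _ bp]) (simp add: ent)
    moreover have "T' - T \<in> carrier_mat (m*d) (m*d)" by (rule minus_carrier_mat[OF Tc])
    ultimately show ?thesis unfolding psd_iff by simp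
  qed
  have c_ax: "D S (complex_of_real k \<cdot>\<^sub>m U) = D S U + ereal (log b (1 / k))"
    if "psd N S" "psd N U" "k > 0" for N S U k
    using rel that unfolding rel_K_entropy_def by blast
  have d_ax: "D \<rho>' \<rho>' = 0" if "density N \<rho>'" for N \<rho>'
    using rel that unfolding rel_K_entropy_def by blast
  have "D R T' \<le> D R T" by (rule D_mono[OF rel Rpsd Tpsd T'psd difpsd])
  also have "D R T = D R R + ereal (log b (1 / (1/c)))" unfolding T_def
    by (rule c_ax[OF Rpsd Rpsd]) (use c0 in simp)
  also have "\<dots> = ereal (log b c)" using d_ax[OF Rdens] by simp
  finally have DT: "D R T' \<le> ereal (log b c)" .
  have lg: "log b (1 / c) = - log b c" using c0 b0 b1 by (simp add: log_divide)
  have H1: "ereal (log b (1 / c)) \<le> - D R T'"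
    unfolding lg using DT by (simp add: ereal_minus_le_minus flip: uminus_ereal.simps)
  have H1': "H_K1 D m d R = - D R T'" unfolding H_K1_def T'_def \<sigma>_def ..
  have H2': "- D R T' \<le> H_K2 D m d R" unfolding H_K2_def T'_def
    by (rule SUP_upper) (use \<sigma>dens in simp)
  have g1: "ereal (log b (1 / c)) \<le> H_K1 D m d R" using H1 H1' by simp
  have g2: "ereal (log b (1 / c)) \<le> H_K2 D m d R" using H1 H2' by (rule order_trans)
  show ?thesis
    using g1 g2 unfolding m_def[symmetric] n_def[symmetric] d_def[symmetric] R_def[symmetric] c_def[symmetric]
    by simp
qed


end
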